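(* Let $T$ be a bounded linear operator on a Banach space $X$ such that $\|T^n\|^{1/n}=o(1/n)$ as $n\to\infty$. Then $I+T$ does not satisfy the Kitai Criterion.
   Context: A bounded linear operator $A$ on a Banach space $X$ satisfies the Kitai Criterion if there exist two dense subsets $E$ and $F$ of $X$ and a map $S:F\to F$ such that $ASy=y$, $S^k y\to 0$ and $A^k x\to 0$ as $k\to\infty$ for every $y\in F$ and $x\in E$. *)

theory Defs
  imports "HOL-Analysis.Analysis" "HOL-Library.Landau_Symbols"
begin

definition kitai_criterion :: "('a::real_normed_vector \<Rightarrow> 'a) \<Rightarrow> bool" where
  "kitai_criterion A \<longleftrightarrow>
     (\<exists>E F (S::'a \<Rightarrow> 'a).
        closure E = UNIV \<and> closure F = UNIV \<and> S ` F \<subseteq> F \<and>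
        (\<forall>y\<in>F. A (S y) = y \<and> (\<lambda>k. (S ^^ k) y) \<longlonglongrightarrow> 0) \<and>
        (\<forall>x\<in>E. (\<lambda>k. (A ^^ k) x) \<longlonglongrightarrow> 0))"

end

theory Submission
  imports Defs "HOL-Complex_Analysis.Complex_Analysis"
begin

definition pfun :: "'a::real_normed_vector \<Rightarrow> ('a \<times> real) set \<Rightarrow> bool" where
 "pfun x G \<longleftrightarrow> (0,0) \<in> G
    \<and> (\<forall>v a w b. (v,a)\<in>G \<longrightarrow> (w,b)\<in>G \<longrightarrow> (v+w, a+b) \<in> G)
    \<and> (\<forall>c v a. (v,a)\<in>G \<longrightarrow> (c *\<^sub>R v, c*a) \<in> G)
    \<and> (\<forall>v a b. (v,a)\<in>G \<longrightarrow> (v,b)\<in>G \<longrightarrow> a = b)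
    \<and> (\<forall>v a. (v,a)\<in>G \<longrightarrow> a \<le> norm v) \<and> (x, norm x) \<in> G"

lemma pfun_base: "pfun x (range (\<lambda>t. (t *\<^sub>R x, t * norm x)))"
  unfolding pfun_def
proof (intro conjI allI impI)
  show "(0,0) \<in> range (\<lambda>t. (t *\<^sub>R x, t * norm x))" by (rule image_eqI[of _ _ 0]) simp_all
  show "(x, norm x) \<in> range (\<lambda>t. (t *\<^sub>R x, t * norm x))" by (rule image_eqI[of _ _ 1]) simp_all
next
  fix v a w b assume "(v,a) \<in> range (\<lambda>t. (t *\<^sub>R x, t * norm x))" "(w,b) \<in> range (\<lambda>t. (t *\<^sub>R x, t * norm x))"
  then obtain t s where "v = t *\<^sub>R x" "a = t * norm x" "w = s *\<^sub>R x" "b = s * norm x" by auto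
  then show "(v+w, a+b) \<in> range (\<lambda>t. (t *\<^sub>R x, t * norm x))"
    by (intro image_eqI[of _ _ "t+s"]) (simp_all add: scaleR_add_left distrib_right)
next
  fix c v a assume "(v,a) \<in> range (\<lambda>t. (t *\<^sub>R x, t * norm x))"
  then obtain t where "v = t *\<^sub>R x" "a = t * norm x" by auto
  then show "(c *\<^sub>R v, c*a) \<in> range (\<lambda>t. (t *\<^sub>R x, t * norm x))"
    by (intro image_eqI[of _ _ "c*t"]) simp_all
next
  fix v a b assume "(v,a) \<in> range (\<lambda>t. (t *\<^sub>R x, t * norm x))" "(v,b) \<in> range (\<lambda>t. (t *\<^sub>R x, t * norm x))"
  then obtain t s where "(v,a) = (t *\<^sub>R x, t * norm x)" "(v,b) = (s *\<^sub>R x, s * norm x)" by blast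
  then have ts: "v = t *\<^sub>R x" "a = t * norm x" "v = s *\<^sub>R x" "b = s * norm x" by simp_all
  show "a = b"
  proof (cases "x = 0")
    case True then show ?thesis using ts by simp
  next
    case False
    then have "t = s" using ts by (metis scaleR_cancel_right)
    then show ?thesis using ts by simp
  qed
next
  fix v a assume "(v,a) \<in> range (\<lambda>t. (t *\<^sub>R x, t * norm x))"
  then obtain t where "v = t *\<^sub>R x" "a = t * norm x" by auto
  then show "a \<le> norm v" by (simp add: mult_right_mono)
qed

lemma pfunD:
  assumes "pfun x G"
  shows "(0,0) \<in> G" "\<And>v a w b. (v,a)\<in>G \<Longrightarrow> (w,b)\<in>G \<Longrightarrow> (v+w, a+b) \<in> G"
    "\<And>c v a. (v,a)\<in>G \<Longrightarrow> (c *\<^sub>R v, c*a) \<in> G"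
    "\<And>v a b. (v,a)\<in>G \<Longrightarrow> (v,b)\<in>G \<Longrightarrow> a = b"
    "\<And>v a. (v,a)\<in>G \<Longrightarrow> a \<le> norm v" "(x, norm x) \<in> G"
  using assms unfolding pfun_def by blast+

lemma pfun_chain:
  assumes "C \<noteq> {}" "\<forall>G\<in>C. pfun x G" "\<forall>G\<in>C. \<forall>H\<in>C. G \<subseteq> H \<or> H \<subseteq> G"
  shows "pfun x (\<Union>C)"
proof -
  have two: "\<exists>G\<in>C. p \<in> G \<and> q \<in> G" if "p \<in> \<Union>C" "q \<in> \<Union>C" for p q
    using that assms(3) by blast
  obtain G0 where "G0 \<in> C" using assms(1) by blast
  show ?thesis unfolding pfun_def
  proof (intro conjI allI impI)
    show "(0,0) \<in> \<Union>C" using \<open>G0 \<in> C\<close> assms(2) pfunD(1) by blast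
    show "(x, norm x) \<in> \<Union>C" using \<open>G0 \<in> C\<close> assms(2) pfunD(6) by blast
    fix v a w b assume "(v,a) \<in> \<Union>C" "(w,b) \<in> \<Union>C"
    then obtain G where "G \<in> C" "(v,a) \<in> G" "(w,b) \<in> G" using two by blast
    then show "(v+w, a+b) \<in> \<Union>C" using assms(2) pfunD(2) by blast
  next
    fix c v a assume "(v,a) \<in> \<Union>C"
    then obtain G where "G \<in> C" "(v,a) \<in> G" by blast
    then show "(c *\<^sub>R v, c*a) \<in> \<Union>C" using assms(2) pfunD(3) by blast
  next
    fix v a b assume "(v,a) \<in> \<Union>C" "(v,b) \<in> \<Union>C"
    then obtain G where "G \<in> C" "(v,a) \<in> G" "(v,b) \<in> G" using two by blast
    then show "a = b" using assms(2) pfunD(4) by blast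
  next
    fix v a assume "(v,a) \<in> \<Union>C"
    then obtain G where "G \<in> C" "(v,a) \<in> G" by blast
    then show "a \<le> norm v" using assms(2) pfunD(5) by blast
  qed
qed

lemma pfun_extend:
  assumes G: "pfun x G" and v: "\<forall>a. (v,a) \<notin> G"
  shows "\<exists>G'. pfun x G' \<and> G \<subseteq> G' \<and> G' \<noteq> G"
proof -
  from G have G0: "(0,0) \<in> G"
    and Gadd: "\<And>v a w b. (v,a)\<in>G \<Longrightarrow> (w,b)\<in>G \<Longrightarrow> (v+w, a+b) \<in> G"
    and Gsc: "\<And>c v a. (v,a)\<in>G \<Longrightarrow> (c *\<^sub>R v, c*a) \<in> G"
    and Gfun: "\<And>v a b. (v,a)\<in>G \<Longrightarrow> (v,b)\<in>G \<Longrightarrow> a = b"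
    and Gdom: "\<And>v a. (v,a)\<in>G \<Longrightarrow> a \<le> norm v"
    and Gx: "(x, norm x) \<in> G" unfolding pfun_def by blast+
  define L where "L = {a - norm (w - v) | w a. (w,a) \<in> G}"
  define c where "c = Sup L"
  have key: "a1 - norm (w1 - v) \<le> norm (w2 + v) - a2" if "(w1,a1)\<in>G" "(w2,a2)\<in>G" for w1 a1 w2 a2
  proof -
    have "a1 + a2 \<le> norm (w1 + w2)" using Gdom[OF Gadd[OF that]] .
    also have "\<dots> = norm ((w1 - v) + (w2 + v))" by (simp add: algebra_simps)
    also have "\<dots> \<le> norm (w1 - v) + norm (w2 + v)" by (rule norm_triangle_ineq)
    finally show ?thesis by simp
  qed
  have Lne: "L \<noteq> {}" using G0 unfolding L_def by blast
  have Lbdd: "bdd_above L" unfolding L_def bdd_above_def using key[OF _ G0] by auto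
  have c_lo: "a - norm (w - v) \<le> c" if "(w,a) \<in> G" for w a
    unfolding c_def by (rule cSup_upper[OF _ Lbdd]) (use that L_def in blast)
  have c_hi: "c \<le> norm (w + v) - a" if "(w,a) \<in> G" for w a
    unfolding c_def by (rule cSup_least[OF Lne]) (use key that L_def in auto)
  define G' where "G' = {(w + t *\<^sub>R v, a + t * c) | w a t. (w,a) \<in> G}"
  have dom: "a + t * c \<le> norm (w + t *\<^sub>R v)" if "(w,a) \<in> G" for w a t
  proof (cases "t = 0")
    case True then show ?thesis using Gdom[OF that] by simp
  next
    case False
    show ?thesis
    proof (cases "t > 0")
      case True
      have "(inverse t *\<^sub>R w, inverse t * a) \<in> G" using Gsc[OF that] .
      from c_hi[OF this] have "c \<le> norm (inverse t *\<^sub>R w + v) - inverse t * a" .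
      then have "t * c \<le> t * norm (inverse t *\<^sub>R w + v) - a"
        using True by (simp add: field_simps)
      also have "t * norm (inverse t *\<^sub>R w + v) = norm (t *\<^sub>R (inverse t *\<^sub>R w + v))"
        using True by simp
      also have "t *\<^sub>R (inverse t *\<^sub>R w + v) = w + t *\<^sub>R v"
        using True by (simp add: scaleR_add_right)
      finally show ?thesis by simp
    next
      case False2: False
      then have tn: "t < 0" using False by simp
      have "(inverse (-t) *\<^sub>R w, inverse (-t) * a) \<in> G" using Gsc[OF that] .
      from c_lo[OF this] have "inverse (-t) * a - norm (inverse (-t) *\<^sub>R w - v) \<le> c" .
      then have "a - (-t) * norm (inverse (-t) *\<^sub>R w - v) \<le> (-t) * c"
        using tn by (simp add: field_simps)
      also have "(-t) * norm (inverse (-t) *\<^sub>R w - v) = norm ((-t) *\<^sub>R (inverse (-t) *\<^sub>R w - v))"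
        using tn by simp
      also have "(-t) *\<^sub>R (inverse (-t) *\<^sub>R w - v) = w + t *\<^sub>R v"
        using tn by (simp add: scaleR_diff_right)
      finally show ?thesis by simp
    qed
  qed
  have "pfun x G'" unfolding pfun_def
  proof (intro conjI allI impI)
    show "(0,0) \<in> G'" unfolding G'_def
      by (rule CollectI, rule exI[of _ 0], rule exI[of _ 0], rule exI[of _ 0]) (simp add: G0)
    show "(x, norm x) \<in> G'" unfolding G'_def
      by (rule CollectI, rule exI[of _ x], rule exI[of _ "norm x"], rule exI[of _ 0]) (simp add: Gx)
  next
    fix p a q b assume "(p,a) \<in> G'" "(q,b) \<in> G'"
    then obtain w1 a1 t1 w2 a2 t2 where "(w1,a1)\<in>G" "(w2,a2)\<in>G"
      "p = w1 + t1 *\<^sub>R v" "a = a1 + t1 * c" "q = w2 + t2 *\<^sub>R v" "b = a2 + t2 * c"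
      unfolding G'_def by blast
    then show "(p+q, a+b) \<in> G'" unfolding G'_def
      by (intro CollectI exI[of _ "w1+w2"] exI[of _ "a1+a2"] exI[of _ "t1+t2"])
        (auto simp: Gadd scaleR_add_left algebra_simps)
  next
    fix r p a assume "(p,a) \<in> G'"
    then obtain w1 a1 t1 where "(w1,a1)\<in>G" "p = w1 + t1 *\<^sub>R v" "a = a1 + t1 * c"
      unfolding G'_def by blast
    then have eq: "(r *\<^sub>R p, r*a) = (r *\<^sub>R w1 + (r*t1) *\<^sub>R v, r*a1 + (r*t1)*c)"
      by (simp add: scaleR_add_right distrib_left)
    have w1: "(r *\<^sub>R w1, r*a1) \<in> G" using Gsc \<open>(w1,a1)\<in>G\<close> by blast
    show "(r *\<^sub>R p, r*a) \<in> G'" unfolding G'_def eq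
      by (rule CollectI, rule exI[of _ "r *\<^sub>R w1"], rule exI[of _ "r*a1"], rule exI[of _ "r*t1"]) (simp add: w1)
  next
    fix p a b assume "(p,a) \<in> G'" "(p,b) \<in> G'"
    then obtain w1 a1 t1 w2 a2 t2 where h: "(w1,a1)\<in>G" "(w2,a2)\<in>G"
      "p = w1 + t1 *\<^sub>R v" "a = a1 + t1 * c" "p = w2 + t2 *\<^sub>R v" "b = a2 + t2 * c"
      unfolding G'_def by blast
    have "t1 = t2"
    proof (rule ccontr)
      assume ne: "t1 \<noteq> t2"
      have "(w1 + (-1) *\<^sub>R w2, a1 + (-1) * a2) \<in> G" using Gadd[OF h(1) Gsc[OF h(2)]] .
      then have "(inverse (t2 - t1) *\<^sub>R (w1 - w2), inverse (t2 - t1) * (a1 - a2)) \<in> G"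
        using Gsc by simp
      moreover have "w1 - w2 = (t2 - t1) *\<^sub>R v" using h(3,5) by (simp add: algebra_simps)
      ultimately have "(v, inverse (t2 - t1) * (a1 - a2)) \<in> G" using ne by simp
      then show False using v by blast
    qed
    then have "w1 = w2" using h by simp
    then show "a = b" using h \<open>t1 = t2\<close> Gfun by metis
  next
    fix p a assume "(p,a) \<in> G'"
    then show "a \<le> norm p" unfolding G'_def using dom by blast
  qed
  moreover have "G \<subseteq> G'" unfolding G'_def by (force intro: exI[of _ 0])
  moreover have "(v, c) \<in> G'" unfolding G'_def
    by (rule CollectI, rule exI[of _ 0], rule exI[of _ 0], rule exI[of _ 1]) (simp add: G0)
  ultimately show ?thesis using v by blast
qed

lemma hahn_banach_norming:
  fixes x :: "'a::real_normed_vector"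
  shows "\<exists>\<phi>::'a\<Rightarrow>real. (\<forall>u v. \<phi> (u + v) = \<phi> u + \<phi> v) \<and> (\<forall>c v. \<phi> (c *\<^sub>R v) = c * \<phi> v)
     \<and> (\<forall>v. \<bar>\<phi> v\<bar> \<le> norm v) \<and> \<phi> x = norm x"
proof -
  define A where "A = {G. pfun x G}"
  have "\<forall>C\<in>chains A. \<exists>U\<in>A. \<forall>X\<in>C. X \<subseteq> U"
  proof
    fix C assume C: "C \<in> chains A"
    show "\<exists>U\<in>A. \<forall>X\<in>C. X \<subseteq> U"
    proof (cases "C = {}")
      case True then show ?thesis using pfun_base[of x] A_def by blast
    next
      case False
      have "pfun x (\<Union>C)"
        using pfun_chain[OF False] C unfolding chains_def chain_subset_def A_def by blast
      then show ?thesis unfolding A_def by blast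
    qed
  qed
  from Zorn_Lemma2[OF this] obtain M where M: "M \<in> A" and max: "\<forall>X\<in>A. M \<subseteq> X \<longrightarrow> X = M" by blast
  have pM: "pfun x M" using M A_def by simp
  have tot: "\<exists>a. (v,a) \<in> M" for v
  proof (rule ccontr)
    assume "\<nexists>a. (v, a) \<in> M"
    then obtain G' where "pfun x G'" "M \<subseteq> G'" "G' \<noteq> M" using pfun_extend[OF pM] by blast
    then show False using max A_def by blast
  qed
  from pM have M0: "(0,0) \<in> M"
    and Madd: "\<And>v a w b. (v,a)\<in>M \<Longrightarrow> (w,b)\<in>M \<Longrightarrow> (v+w, a+b) \<in> M"
    and Msc: "\<And>c v a. (v,a)\<in>M \<Longrightarrow> (c *\<^sub>R v, c*a) \<in> M"
    and Mfun: "\<And>v a b. (v,a)\<in>M \<Longrightarrow> (v,b)\<in>M \<Longrightarrow> a = b"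
    and Mdom: "\<And>v a. (v,a)\<in>M \<Longrightarrow> a \<le> norm v"
    and Mx: "(x, norm x) \<in> M" unfolding pfun_def by blast+
  define \<phi> where "\<phi> v = (THE a. (v,a) \<in> M)" for v
  have phiM: "(v, \<phi> v) \<in> M" for v
    unfolding \<phi>_def using tot[of v] Mfun by (metis theI)
  have phi_eq: "\<phi> v = a" if "(v,a) \<in> M" for v a using Mfun[OF that phiM] by simp
  show ?thesis
  proof (intro exI[of _ \<phi>] conjI allI)
    show "\<phi> (u + v) = \<phi> u + \<phi> v" for u v using phi_eq[OF Madd[OF phiM phiM]] .
    show "\<phi> (c *\<^sub>R v) = c * \<phi> v" for c v using phi_eq[OF Msc[OF phiM]] .
    show "\<bar>\<phi> v\<bar> \<le> norm v" for v
    proof -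
      have "\<phi> v \<le> norm v" using Mdom[OF phiM] .
      moreover have "-\<phi> v \<le> norm v" using Mdom[OF Msc[OF phiM, of "-1"]] by simp
      ultimately show ?thesis by simp
    qed
    show "\<phi> x = norm x" using phi_eq[OF Mx] .
  qed
qed

lemma funpow_bl:
  fixes T :: "'a::real_normed_vector \<Rightarrow> 'a"
  shows "bounded_linear T \<Longrightarrow> bounded_linear (T^^n)"
proof (induction n)
  case 0
  have e: "T ^^ 0 = (\<lambda>x. x)" by (rule ext) simp
  show ?case unfolding e by (rule bounded_linear_ident)
next
  case (Suc n)
  have e: "T ^^ Suc n = (\<lambda>x. T ((T^^n) x))" by (rule ext) simp
  show ?case unfolding e by (rule bounded_linear_compose[OF Suc.prems Suc.IH[OF Suc.prems]])
qed

lemma binom_expand: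
  fixes T :: "'a::real_vector \<Rightarrow> 'a"
  assumes lin: "linear T" and e: "\<And>j. e (Suc j) = T (e j)"
  shows "((\<lambda>v. v + T v)^^k) (e 0) = (\<Sum>j\<le>k. of_nat (k choose j) *\<^sub>R e j)"
proof (induction k)
  case 0 then show ?case by simp
next
  case (Suc k)
  define S where "S = (\<Sum>j\<le>k. of_nat (k choose j) *\<^sub>R e j)"
  have TS: "T S = (\<Sum>j\<le>k. of_nat (k choose j) *\<^sub>R e (Suc j))"
    unfolding S_def by (simp add: linear_sum[OF lin] linear_scale[OF lin] e)
  have S2: "S = e 0 + (\<Sum>j\<le>k. of_nat (k choose Suc j) *\<^sub>R e (Suc j))"
  proof -
    have "S = (\<Sum>j\<le>Suc k. of_nat (k choose j) *\<^sub>R e j)" unfolding S_def by simp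
    also have "\<dots> = e 0 + (\<Sum>j\<le>k. of_nat (k choose Suc j) *\<^sub>R e (Suc j))"
      by (subst sum.atMost_Suc_shift) simp
    finally show ?thesis .
  qed
  have "((\<lambda>v. v + T v)^^Suc k) (e 0) = S + T S" using Suc by (simp add: S_def)
  also have "\<dots> = e 0 + (\<Sum>j\<le>k. of_nat (Suc k choose Suc j) *\<^sub>R e (Suc j))"
    unfolding TS by (subst S2) (simp add: sum.distrib scaleR_add_left algebra_simps)
  also have "\<dots> = (\<Sum>j\<le>Suc k. of_nat (Suc k choose j) *\<^sub>R e j)"
    by (subst sum.atMost_Suc_shift) simp
  finally show ?case .
qed

lemma growth_bound:
  fixes T :: "'a::real_normed_vector \<Rightarrow> 'a"
  assumes bl: "bounded_linear T"
    and growth: "(\<lambda>n. onorm (T ^^ n) powr (1 / real n)) \<in> o(\<lambda>n. 1 / real n)"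
    and eta: "\<eta> > 0"
  shows "\<exists>K\<ge>0. \<forall>j. onorm (T^^j) \<le> K * (\<eta> / real j) ^ j"
proof -
  from growth eta have "eventually (\<lambda>n. norm (onorm (T ^^ n) powr (1 / real n)) \<le> \<eta> * norm (1 / real n)) at_top"
    unfolding smallo_def by blast
  then obtain N where N: "\<And>n. n \<ge> N \<Longrightarrow> norm (onorm (T ^^ n) powr (1 / real n)) \<le> \<eta> * norm (1 / real n)"
    unfolding eventually_at_top_linorder by blast
  have big: "onorm (T^^n) \<le> (\<eta> / real n) ^ n" if "n \<ge> N" "n \<ge> 1" for n
  proof -
    define y where "y = onorm (T^^n)"
    have y0: "y \<ge> 0" unfolding y_def by (rule onorm_pos_le[OF funpow_bl[OF bl]])
    have "y powr (1 / real n) \<le> \<eta> / real n"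
      using N[OF that(1)] that(2) y0 by (simp add: y_def)
    show ?thesis
    proof (cases "y = 0")
      case True then show ?thesis using eta by (simp add: y_def[symmetric])
    next
      case False
      have "y = (y powr (1 / real n)) ^ n"
        using False y0 that(2) by (simp add: powr_realpow[symmetric] powr_powr)
      also have "\<dots> \<le> (\<eta> / real n) ^ n"
        by (rule power_mono) (use \<open>y powr (1 / real n) \<le> \<eta> / real n\<close> in auto)
      finally show ?thesis by (simp add: y_def)
    qed
  qed
  define M where "M = max N 1"
  define K where "K = 1 + (\<Sum>j<M. onorm (T^^j) / (\<eta> / real j) ^ j)"
  have pos: "(\<eta> / real j) ^ j > 0" for j
    using eta by (cases j) auto
  have terms: "onorm (T^^j) / (\<eta> / real j) ^ j \<ge> 0" for j
    using onorm_pos_le[OF funpow_bl[OF bl]] pos[of j] by simp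
  have K1: "K \<ge> 1" unfolding K_def using terms by (simp add: sum_nonneg)
  show ?thesis
  proof (intro exI[of _ K] conjI allI)
    show "K \<ge> 0" using K1 by simp
    fix j
    show "onorm (T^^j) \<le> K * (\<eta> / real j) ^ j"
    proof (cases "j < M")
      case True
      have "onorm (T^^j) / (\<eta> / real j) ^ j \<le> (\<Sum>j<M. onorm (T^^j) / (\<eta> / real j) ^ j)"
        by (rule member_le_sum) (use True terms in auto)
      then have "onorm (T^^j) / (\<eta> / real j) ^ j \<le> K" unfolding K_def by simp
      then show ?thesis using pos[of j] by (simp add: divide_le_eq)
    next
      case False
      then have "onorm (T^^j) \<le> (\<eta> / real j) ^ j" using big M_def by auto
      also have "\<dots> \<le> K * (\<eta> / real j) ^ j" using K1 pos[of j] by simp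
      finally show ?thesis .
    qed
  qed
qed

lemma le_from_exp:
  fixes y B s :: real
  assumes B: "B > 0" and s: "s \<ge> 0" and h: "\<And>\<sigma>. \<sigma> > 0 \<Longrightarrow> y \<le> B * exp (\<sigma> * s)"
  shows "y \<le> B"
proof (rule ccontr)
  assume "\<not> y \<le> B"
  then have yB: "y > B" by simp
  define \<sigma> where "\<sigma> = ln (y / B) / (s + 1)"
  have l: "ln (y / B) > 0" using yB B by simp
  have sp: "\<sigma> > 0" unfolding \<sigma>_def using l s by simp
  have "\<sigma> * s < ln (y / B)"
  proof -
    have "\<sigma> * s = ln (y / B) * (s / (s + 1))" unfolding \<sigma>_def by simp
    also have "\<dots> < ln (y / B) * 1" using l s by (intro mult_strict_left_mono) auto
    finally show ?thesis by simp
  qed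
  then have "exp (\<sigma> * s) < y / B" using yB B
    by (metis divide_pos_pos exp_less_cancel_iff exp_ln less_trans)
  then have "B * exp (\<sigma> * s) < y" using B by (simp add: field_simps)
  with h[OF sp] show False by simp
qed

lemma le_from_lin:
  fixes y M c :: real
  assumes h: "\<And>\<eta>. \<eta> > 0 \<Longrightarrow> y \<le> M + \<eta> * c" and c: "c \<ge> 0"
  shows "y \<le> M"
proof (rule ccontr)
  assume "\<not> y \<le> M"
  then have "y - M > 0" by simp
  define \<eta> where "\<eta> = (y - M) / (2 * (c + 1))"
  have ep: "\<eta> > 0" unfolding \<eta>_def using \<open>y - M > 0\<close> c by simp
  have "\<eta> * c < y - M"
  proof -
    have "\<eta> * c \<le> \<eta> * (c + 1)" using ep by simp
    also have "\<dots> = (y - M) / 2" unfolding \<eta>_def using c by (simp add: field_split_simps)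
    finally show ?thesis using \<open>y - M > 0\<close> by simp
  qed
  with h[OF ep] show False by simp
qed

lemma eventually_small_exp:
  fixes C \<sigma> B :: real
  assumes "\<sigma> > 0" "B > 0"
  shows "eventually (\<lambda>R. C * exp (- \<sigma> * R) \<le> B) at_top"
proof -
  have "((\<lambda>R. C * exp (- \<sigma> * R)) \<longlongrightarrow> 0) at_top"
    using assms(1) by real_asymp
  from order_tendstoD(2)[OF this assms(2)] show ?thesis by (rule eventually_mono) simp
qed

lemma mul_exp_le:
  fixes y B t :: real
  assumes "y * exp (- t) \<le> B"
  shows "y \<le> B * exp t"
proof -
  have "y = (y * exp (- t)) * exp t" by (simp add: exp_minus field_simps)
  also have "\<dots> \<le> B * exp t" by (rule mult_right_mono[OF assms]) simp
  finally show ?thesis .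
qed

lemma PL_quadrant:
  fixes f :: "complex \<Rightarrow> complex"
  assumes hol: "f holomorphic_on UNIV" and B: "B > 0"
    and re: "\<And>t. t \<ge> 0 \<Longrightarrow> norm (f (of_real t)) \<le> B"
    and im: "\<And>t. t \<ge> 0 \<Longrightarrow> norm (f (\<i> * of_real t)) \<le> B"
    and gr: "\<And>\<delta>. \<delta> > 0 \<Longrightarrow> \<exists>C. \<forall>w. Re w \<ge> 0 \<longrightarrow> Im w \<ge> 0 \<longrightarrow> norm (f w) \<le> C * exp (\<delta> * norm w)"
    and w0: "Re w0 \<ge> 0" "Im w0 \<ge> 0"
  shows "norm (f w0) \<le> B"
proof (rule le_from_exp[OF B, of "Re w0 + Im w0"])
  show "Re w0 + Im w0 \<ge> 0" using w0 by simp
  fix \<sigma> :: real assume sp: "\<sigma> > 0"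
  obtain C where C: "\<And>w. Re w \<ge> 0 \<Longrightarrow> Im w \<ge> 0 \<Longrightarrow> norm (f w) \<le> C * exp (\<sigma>/2 * norm w)"
    using gr[of "\<sigma>/2"] sp by auto
  define \<tau> where "\<tau> = Complex (-\<sigma>) \<sigma>"
  define F where "F w = f w * exp (\<tau> * w)" for w
  have [simp]: "Re \<tau> = - \<sigma>" "Im \<tau> = \<sigma>" unfolding \<tau>_def by simp_all
  have normF: "norm (F w) = norm (f w) * exp (- \<sigma> * (Re w + Im w))" for w
    unfolding F_def by (simp add: norm_mult algebra_simps)
  have "eventually (\<lambda>R. C * exp (- (\<sigma>/2) * R) \<le> B) at_top"
    using eventually_small_exp[of "\<sigma>/2" B C] sp B by simp
  moreover have "eventually (\<lambda>R. R > norm w0) at_top" by (rule eventually_gt_at_top)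
  ultimately obtain R where R1: "C * exp (- (\<sigma>/2) * R) \<le> B" and R2: "R > norm w0"
    using eventually_happens'[OF trivial_limit_at_top_linorder] by (metis (mono_tags, lifting) eventually_conj_iff eventually_happens' trivial_limit_at_top_linorder)
  define S where "S = {z. Re z \<ge> 0} \<inter> {z. Im z \<ge> 0} \<inter> cball 0 R"
  have clS: "closed S" unfolding S_def
    by (intro closed_Int closed_halfspace_Re_ge closed_halfspace_Im_ge closed_cball)
  have bS: "bounded S" unfolding S_def by (meson bounded_cball bounded_Int)
  define Op where "Op = {z. Re z > 0} \<inter> {z. Im z > 0} \<inter> ball 0 R"
  have OS: "Op \<subseteq> interior S"
    by (rule interior_maximal) (auto simp: Op_def S_def open_halfspace_Re_gt open_halfspace_Im_gt intro!: open_Int)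
  have holF: "F holomorphic_on UNIV" unfolding F_def using hol by (intro holomorphic_intros) auto
  have front: "norm (F z) \<le> B" if z: "z \<in> frontier S" for z
  proof -
    have zS: "z \<in> S" using z clS by (simp add: frontier_def)
    have zO: "z \<notin> Op" using z OS by (auto simp: frontier_def)
    have x0: "Re z \<ge> 0" and y0: "Im z \<ge> 0" and zR: "norm z \<le> R" using zS by (auto simp: S_def)
    have ex: "exp (- \<sigma> * (Re z + Im z)) \<le> 1" using x0 y0 sp by simp
    consider "Re z = 0" | "Im z = 0" | "norm z = R"
      using zO x0 y0 zR by (force simp: Op_def)
    then show ?thesis
    proof cases
      case 1
      then have "z = \<i> * of_real (Im z)" by (simp add: complex_eq_iff)
      then have "norm (f z) \<le> B" using im[OF y0] by metis
      then show ?thesis unfolding normF using ex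
        by (meson mult_le_one norm_ge_zero exp_ge_zero order_trans mult_left_le norm_ge_zero)
    next
      case 2
      then have "z = of_real (Re z)" by (simp add: complex_eq_iff)
      then have "norm (f z) \<le> B" using re[OF x0] by metis
      then show ?thesis unfolding normF using ex
        by (meson mult_le_one norm_ge_zero exp_ge_zero order_trans mult_left_le norm_ge_zero)
    next
      case 3
      have fz: "norm (f z) \<le> C * exp (\<sigma>/2 * R)" using C[OF x0 y0] 3 by simp
      have C0: "C \<ge> 0" using order_trans[OF norm_ge_zero fz] by (simp add: zero_le_mult_iff)
      have sum: "Re z + Im z \<ge> R" using cmod_le[of z] x0 y0 3 by simp
      have "norm (F z) \<le> C * exp (\<sigma>/2 * R) * exp (- \<sigma> * (Re z + Im z))"
        unfolding normF by (rule mult_right_mono[OF fz]) simp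
      also have "\<dots> \<le> C * exp (\<sigma>/2 * R) * exp (- \<sigma> * R)"
        using C0 sum sp by (intro mult_left_mono) (auto intro: mult_nonneg_nonneg)
      also have "\<dots> = C * exp (- (\<sigma>/2) * R)"
      proof -
        have e: "\<sigma>/2 * R + - \<sigma> * R = - (\<sigma>/2) * R" by (simp add: algebra_simps)
        show ?thesis using exp_add[of "\<sigma>/2 * R" "- \<sigma> * R"] unfolding e by (simp add: mult.assoc)
      qed
      also have "\<dots> \<le> B" by (rule R1)
      finally show ?thesis .
    qed
  qed
  have w0S: "w0 \<in> S" using w0 R2 by (simp add: S_def)
  have "norm (F w0) \<le> B"
  proof (rule maximum_modulus_frontier[where f = F and S = S and B = B and \<xi> = w0])
    show "F holomorphic_on interior S" by (rule holomorphic_on_subset[OF holF]) simp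
    show "continuous_on (closure S) F"
      by (rule continuous_on_subset[OF holomorphic_on_imp_continuous_on[OF holF]]) simp
    show "bounded S" by (rule bS)
    show "w0 \<in> S" by (rule w0S)
    show "norm (F z) \<le> B" if "z \<in> frontier S" for z using front[OF that] .
  qed
  then have "norm (f w0) * exp (- (\<sigma> * (Re w0 + Im w0))) \<le> B" using normF[of w0] by simp
  from mul_exp_le[OF this] show "norm (f w0) \<le> B * exp (\<sigma> * (Re w0 + Im w0))" .
qed


lemma PL_halfplane:
  fixes f :: "complex \<Rightarrow> complex"
  assumes hol: "f holomorphic_on UNIV" and M: "M > 0"
    and re: "\<And>t. norm (f (of_real t)) \<le> M"
    and bd: "\<And>w. Im w \<ge> 0 \<Longrightarrow> norm (f w) \<le> K"
    and w0: "Im w0 \<ge> 0"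
  shows "norm (f w0) \<le> M"
proof (rule le_from_lin[of _ _ "M * norm w0"])
  show "M * norm w0 \<ge> 0" using M by simp
  fix \<eta> :: real assume ep: "\<eta> > 0"
  define D where "D w = 1 - \<i> * of_real \<eta> * w" for w
  have ReD: "Re (D w) = 1 + \<eta> * Im w" and ImD: "Im (D w) = - \<eta> * Re w" for w
    unfolding D_def by simp_all
  have D1: "norm (D w) \<ge> 1" if "Im w \<ge> 0" for w
  proof -
    have "1 \<le> Re (D w)" using ReD[of w] that ep by simp
    also have "\<dots> \<le> norm (D w)" using abs_Re_le_cmod[of "D w"] by simp
    finally show ?thesis .
  qed
  have D2: "norm (D w) \<ge> \<eta> * norm w" if "Im w \<ge> 0" for w
  proof -
    have "(\<eta> * norm w)^2 = (\<eta> * Re w)^2 + (\<eta> * Im w)^2"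
      by (simp add: power_mult_distrib cmod_power2 algebra_simps)
    also have "\<dots> \<le> (Im (D w))^2 + (Re (D w))^2"
      using that ep unfolding ReD ImD by (simp add: power2_eq_square algebra_simps)
    also have "\<dots> = (norm (D w))^2" by (simp add: cmod_power2)
    finally show ?thesis using ep by (simp add: power2_le_iff_abs_le)
  qed
  have K0: "K \<ge> 0" using bd[of 0] by (smt (verit) norm_ge_zero zero_complex.simps(2))
  define R where "R = max (norm w0 + 1) (K / (\<eta> * M) + 1)"
  have R1: "R > norm w0" and R2: "R > K / (\<eta> * M)" unfolding R_def by auto
  have Rp: "R > 0" using R1 norm_ge_zero[of w0] by linarith
  define F where "F w = f w / D w" for w
  define S where "S = {z. Im z \<ge> 0} \<inter> cball 0 R"
  have clS: "closed S" unfolding S_def by (intro closed_Int closed_halfspace_Im_ge closed_cball)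
  have bS: "bounded S" unfolding S_def by (meson bounded_cball bounded_Int)
  define Op where "Op = {z. Im z > 0} \<inter> ball 0 R"
  have OS: "Op \<subseteq> interior S"
    by (rule interior_maximal) (auto simp: Op_def S_def open_halfspace_Im_gt intro!: open_Int)
  have Dnz: "D w \<noteq> 0" if "Im w \<ge> 0" for w using D1[OF that] by auto
  have holF: "F holomorphic_on S"
  proof -
    have "(\<lambda>w. f w / D w) holomorphic_on S"
    proof (rule holomorphic_on_divide)
      show "f holomorphic_on S" by (rule holomorphic_on_subset[OF hol]) simp
      show "D holomorphic_on S" unfolding D_def by (intro holomorphic_intros)
      show "D z \<noteq> 0" if "z \<in> S" for z using Dnz that by (simp add: S_def)
    qed
    then show ?thesis by (simp add: F_def[abs_def])
  qed
  have front: "norm (F z) \<le> M" if z: "z \<in> frontier S" for z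
  proof -
    have zS: "z \<in> S" using z clS by (simp add: frontier_def)
    have zO: "z \<notin> Op" using z OS by (auto simp: frontier_def)
    have y0: "Im z \<ge> 0" and zR: "norm z \<le> R" using zS by (auto simp: S_def)
    consider "Im z = 0" | "norm z = R" using zO y0 zR by (force simp: Op_def)
    then show ?thesis
    proof cases
      case 1
      then have "z = of_real (Re z)" by (simp add: complex_eq_iff)
      then have fz: "norm (f z) \<le> M" using re by metis
      have "norm (F z) = norm (f z) / norm (D z)" unfolding F_def by (simp add: norm_divide)
      also have "\<dots> \<le> norm (f z)"
      proof -
        have "norm (f z) * 1 \<le> norm (f z) * norm (D z)" by (rule mult_left_mono[OF D1[OF y0]]) simp
        then show ?thesis using D1[OF y0] by (simp add: divide_le_eq)
      qed
      finally show ?thesis using fz by simp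
    next
      case 2
      have "norm (F z) = norm (f z) / norm (D z)" unfolding F_def by (simp add: norm_divide)
      also have "\<dots> \<le> K / (\<eta> * R)"
      proof (rule frac_le)
        show "0 \<le> K" by (rule K0)
        show "norm (f z) \<le> K" by (rule bd[OF y0])
        show "0 < \<eta> * R" using ep Rp by simp
        show "\<eta> * R \<le> norm (D z)" using D2[OF y0] 2 by simp
      qed
      also have "\<dots> \<le> M"
        using R2 ep M Rp by (simp add: field_simps)
      finally show ?thesis .
    qed
  qed
  have w0S: "w0 \<in> S" using w0 R1 by (simp add: S_def)
  have "norm (F w0) \<le> M"
  proof (rule maximum_modulus_frontier[where f = F and S = S and B = M and \<xi> = w0])
    show "F holomorphic_on interior S" by (rule holomorphic_on_subset[OF holF interior_subset])
    show "continuous_on (closure S) F"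
      using holomorphic_on_imp_continuous_on[OF holF] clS by (simp add: closure_closed)
    show "bounded S" by (rule bS)
    show "w0 \<in> S" by (rule w0S)
    show "norm (F z) \<le> M" if "z \<in> frontier S" for z using front[OF that] .
  qed
  then have f1: "norm (f w0) \<le> M * norm (D w0)"
    using D1[OF w0] Dnz[OF w0] by (simp add: F_def norm_divide divide_le_eq)
  have f2: "norm (D w0) \<le> 1 + \<eta> * norm w0"
    unfolding D_def using norm_triangle_ineq4[of 1 "\<i> * of_real \<eta> * w0"] ep
    by (simp add: norm_mult)
  have "M * norm (D w0) \<le> M * (1 + \<eta> * norm w0)" by (rule mult_left_mono[OF f2]) (use M in simp)
  with f1 show "norm (f w0) \<le> M + \<eta> * (M * norm w0)" by (simp add: algebra_simps)
qed

lemma PL_upper: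
  fixes g :: "complex \<Rightarrow> complex"
  assumes hol: "g holomorphic_on UNIV" and M: "M > 0"
    and re: "\<And>t. norm (g (of_real t)) \<le> M"
    and gr: "\<And>\<delta>. \<delta> > 0 \<Longrightarrow> \<exists>C. \<forall>w. norm (g w) \<le> C * exp (\<delta> * norm w)"
    and w0: "Im w0 \<ge> 0"
  shows "norm (g w0) \<le> M"
proof (rule le_from_exp[OF M, of "Im w0"])
  show "Im w0 \<ge> 0" by (rule w0)
  fix \<epsilon> :: real assume ep: "\<epsilon> > 0"
  obtain C where C: "\<And>w. norm (g w) \<le> C * exp (\<epsilon>/2 * norm w)" using gr[of "\<epsilon>/2"] ep by auto
  define f where "f w = g w * exp (\<i> * of_real \<epsilon> * w)" for w
  have normf: "norm (f w) = norm (g w) * exp (- \<epsilon> * Im w)" for w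
    unfolding f_def by (simp add: norm_mult)
  have holf: "f holomorphic_on UNIV" unfolding f_def using hol by (intro holomorphic_intros) auto
  have C0: "C \<ge> 0" using order_trans[OF norm_ge_zero C[of 0]] by (simp add: zero_le_mult_iff)
  define B where "B = max M C"
  have Bp: "B > 0" using M by (simp add: B_def)
  have fle: "norm (f w) \<le> norm (g w)" if "Im w \<ge> 0" for w
    unfolding normf using that ep by (simp add: mult_left_le)
  have fre: "norm (f (of_real t)) \<le> B" for t
    using fle[of "of_real t"] re[of t] B_def by fastforce
  have fim: "norm (f (\<i> * of_real t)) \<le> B" if "t \<ge> 0" for t
  proof -
    have "norm (f (\<i> * of_real t)) = norm (g (\<i> * of_real t)) * exp (- \<epsilon> * t)" by (simp add: normf)
    also have "\<dots> \<le> C * exp (\<epsilon>/2 * t) * exp (- \<epsilon> * t)"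
      using C[of "\<i> * of_real t"] that by (intro mult_right_mono) (auto simp: norm_mult)
    also have "\<dots> = C * exp (- (\<epsilon>/2) * t)"
    proof -
      have e: "\<epsilon>/2 * t + - \<epsilon> * t = - (\<epsilon>/2) * t" by (simp add: algebra_simps)
      show ?thesis using exp_add[of "\<epsilon>/2 * t" "- \<epsilon> * t"] unfolding e by (simp add: mult.assoc)
    qed
    also have "\<dots> \<le> C" using C0 ep that by (simp add: mult_left_le)
    finally show ?thesis by (simp add: B_def)
  qed
  have fgr: "\<exists>C. \<forall>w. Im w \<ge> 0 \<longrightarrow> norm (f w) \<le> C * exp (\<delta> * norm w)" if dp: "\<delta> > 0" for \<delta>
  proof -
    obtain C' where "\<And>w. norm (g w) \<le> C' * exp (\<delta> * norm w)" using gr[OF dp] by auto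
    then show ?thesis using fle order_trans by blast
  qed
  have Q1: "norm (f w) \<le> B" if "Re w \<ge> 0" "Im w \<ge> 0" for w
  proof (rule PL_quadrant[OF holf Bp])
    show "norm (f (of_real t)) \<le> B" if "t \<ge> 0" for t by (rule fre)
    show "t \<ge> 0 \<Longrightarrow> norm (f (\<i> * of_real t)) \<le> B" for t by (rule fim)
    show "\<exists>C. \<forall>w. Re w \<ge> 0 \<longrightarrow> Im w \<ge> 0 \<longrightarrow> norm (f w) \<le> C * exp (\<delta> * norm w)" if "\<delta> > 0" for \<delta>
      using fgr[OF that] by blast
  qed (use that in auto)
  have Q2: "norm (f w) \<le> B" if "Re w \<le> 0" "Im w \<ge> 0" for w
  proof -
    define f2 where "f2 v = f (\<i> * v)" for v
    have "norm (f2 (- \<i> * w)) \<le> B"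
    proof (rule PL_quadrant[of f2 B "- \<i> * w"])
      show "f2 holomorphic_on UNIV" unfolding f2_def
        by (rule holomorphic_on_compose_gen[unfolded o_def, OF _ holf]) (auto intro: holomorphic_intros)
      show "B > 0" by (rule Bp)
      show "norm (f2 (of_real t)) \<le> B" if "t \<ge> 0" for t unfolding f2_def by (rule fim[OF that])
      show "norm (f2 (\<i> * of_real t)) \<le> B" if "t \<ge> 0" for t unfolding f2_def
        using fre[of "- t"] by simp
      show "\<exists>C. \<forall>w. Re w \<ge> 0 \<longrightarrow> Im w \<ge> 0 \<longrightarrow> norm (f2 w) \<le> C * exp (\<delta> * norm w)" if dp: "\<delta> > 0" for \<delta>
      proof -
        obtain C' where C': "\<And>w. Im w \<ge> 0 \<Longrightarrow> norm (f w) \<le> C' * exp (\<delta> * norm w)" using fgr[OF dp] by auto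
        show ?thesis
          by (rule exI[of _ C'], intro allI impI) (use C'[of "\<i> * _"] in \<open>auto simp: f2_def norm_mult\<close>)
      qed
    qed (use that in auto)
    then show ?thesis by (simp add: f2_def)
  qed
  have fH: "norm (f w) \<le> B" if "Im w \<ge> 0" for w
    using Q1 Q2 that by (cases "Re w \<ge> 0") auto
  have fre2: "norm (f (of_real t)) \<le> M" for t
    using fle[of "of_real t"] re[of t] by simp
  have "norm (f w0) \<le> M" by (rule PL_halfplane[OF holf M fre2 fH w0])
  then have "norm (g w0) * exp (- (\<epsilon> * Im w0)) \<le> M" using normf[of w0] by simp
  from mul_exp_le[OF this] show "norm (g w0) \<le> M * exp (\<epsilon> * Im w0)" .
qed

lemma PL_const:
  fixes g :: "complex \<Rightarrow> complex"
  assumes hol: "g holomorphic_on UNIV" and M: "M > 0"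
    and re: "\<And>t. norm (g (of_real t)) \<le> M"
    and gr: "\<And>\<delta>. \<delta> > 0 \<Longrightarrow> \<exists>C. \<forall>w. norm (g w) \<le> C * exp (\<delta> * norm w)"
  shows "g z = g 0"
proof -
  have bnd: "norm (g w) \<le> M" for w
  proof (cases "Im w \<ge> 0")
    case True then show ?thesis using PL_upper[OF hol M re gr] by blast
  next
    case False
    have "norm ((\<lambda>v. g (- v)) (- w)) \<le> M"
    proof (rule PL_upper[of "\<lambda>v. g (- v)" M "- w", OF _ M])
      show "(\<lambda>v. g (- v)) holomorphic_on UNIV"
        by (rule holomorphic_on_compose_gen[unfolded o_def, OF _ hol]) (auto intro: holomorphic_intros)
      show "norm (g (- of_real t)) \<le> M" for t using re[of "-t"] by simp
      show "\<exists>C. \<forall>w. norm (g (- w)) \<le> C * exp (\<delta> * norm w)" if "\<delta> > 0" for \<delta>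
        using gr[OF that] by (metis norm_minus_cancel)
    qed (use False in auto)
    then show ?thesis by simp
  qed
  have "g z = (\<Sum>k\<le>0. (deriv^^k) g 0 / fact k * z ^ k)"
    by (rule Liouville_polynomial[OF hol, of 0 M]) (simp add: bnd)
  then show ?thesis by simp
qed

lemma summable_exp_real: "summable (\<lambda>n. (r::real)^n / fact n)"
  using summable_exp[of r] by (simp add: field_simps)

lemma exp_suminf_real: "(\<Sum>n. (r::real)^n / fact n) = exp r"
proof -
  have "(\<lambda>n. r^n /\<^sub>R fact n) sums exp r" by (rule exp_converges)
  then show ?thesis by (simp add: sums_iff divide_inverse mult.commute)
qed

lemma summable_coeffs:
  fixes a :: "nat \<Rightarrow> real"
  assumes "\<And>j. \<bar>a j\<bar> \<le> Ka"
  shows "summable (\<lambda>j. norm (complex_of_real (a j / fact j) * s^j))"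
proof (rule summable_comparison_test')
  show "summable (\<lambda>j. Ka * (norm s ^ j / fact j))"
    by (intro summable_mult summable_exp_real)
  fix j
  have "norm (norm (complex_of_real (a j / fact j) * s^j)) = \<bar>a j\<bar> * (norm s ^ j / fact j)"
    by (simp add: norm_mult norm_power norm_divide)
  also have "\<dots> \<le> Ka * (norm s ^ j / fact j)"
    by (rule mult_right_mono[OF assms]) simp
  finally show "norm (norm (complex_of_real (a j / fact j) * s^j)) \<le> Ka * (norm s ^ j / fact j)" .
qed

lemma summable_coeffs_real:
  fixes a :: "nat \<Rightarrow> real"
  assumes "\<And>j. \<bar>a j\<bar> \<le> Ka"
  shows "summable (\<lambda>j. \<bar>a j / fact j * s^j\<bar>)"
proof (rule summable_comparison_test')
  show "summable (\<lambda>j. Ka * (\<bar>s\<bar> ^ j / fact j))"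
    by (intro summable_mult summable_exp_real)
  fix j
  have "norm \<bar>a j / fact j * s^j\<bar> = \<bar>a j\<bar> * (\<bar>s\<bar> ^ j / fact j)"
    by (simp add: abs_mult power_abs)
  also have "\<dots> \<le> Ka * (\<bar>s\<bar> ^ j / fact j)"
    by (rule mult_right_mono[OF assms]) simp
  finally show "norm \<bar>a j / fact j * s^j\<bar> \<le> Ka * (\<bar>s\<bar> ^ j / fact j)" .
qed

lemma cauchy_identity:
  fixes a :: "nat \<Rightarrow> real"
  assumes bd: "\<And>j. \<bar>a j\<bar> \<le> Ka"
  shows "exp s * (\<Sum>j. a j / fact j * s^j) = (\<Sum>k. (\<Sum>j\<le>k. of_nat (k choose j) * a j) / fact k * s^k)"
proof -
  have s1: "summable (\<lambda>j. norm (a j / fact j * s^j))"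
    using summable_coeffs_real[OF bd] by simp
  have s2: "summable (\<lambda>m. norm (s^m / fact m))"
    using summable_exp_real[of "\<bar>s\<bar>"] by (simp add: abs_mult power_abs)
  have "(\<Sum>j. a j / fact j * s^j) * (\<Sum>m. s^m / fact m)
      = (\<Sum>k. \<Sum>i\<le>k. (a i / fact i * s^i) * (s^(k - i) / fact (k - i)))"
    by (rule Cauchy_product[OF s1 s2])
  also have "\<dots> = (\<Sum>k. (\<Sum>j\<le>k. of_nat (k choose j) * a j) / fact k * s^k)"
  proof (rule suminf_cong)
    fix k
    have "(\<Sum>i\<le>k. (a i / fact i * s^i) * (s^(k - i) / fact (k - i)))
        = (\<Sum>i\<le>k. (of_nat (k choose i) * a i) / fact k * s^k)"
    proof (rule sum.cong[OF refl])
      fix i assume "i \<in> {..k}"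
      then have ik: "i \<le> k" by simp
      have pw: "s^i * s^(k - i) = s^k" using ik by (simp add: power_add[symmetric])
      have bf: "(of_nat (k choose i) :: real) = fact k / (fact i * fact (k - i))"
        using binomial_fact[OF ik] by simp
      show "(a i / fact i * s^i) * (s^(k - i) / fact (k - i)) = (of_nat (k choose i) * a i) / fact k * s^k"
        unfolding bf pw[symmetric] by (simp add: field_simps)
    qed
    also have "\<dots> = (\<Sum>j\<le>k. of_nat (k choose j) * a j) / fact k * s^k"
      by (simp add: sum_distrib_right sum_divide_distrib)
    finally show "(\<Sum>i\<le>k. (a i / fact i * s^i) * (s^(k - i) / fact (k - i)))
        = (\<Sum>j\<le>k. of_nat (k choose j) * a j) / fact k * s^k" .
  qed
  finally show ?thesis by (simp add: exp_suminf_real mult.commute)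
qed

lemma poisson_bound:
  fixes b :: "nat \<Rightarrow> real"
  assumes bd: "\<And>k. \<bar>b k\<bar> \<le> Bb" and s: "s \<ge> 0"
  shows "\<bar>\<Sum>k. b k / fact k * s^k\<bar> \<le> Bb * exp s"
proof -
  have sm: "summable (\<lambda>k. \<bar>b k / fact k * s^k\<bar>)" by (rule summable_coeffs_real[OF bd])
  have "\<bar>\<Sum>k. b k / fact k * s^k\<bar> \<le> (\<Sum>k. \<bar>b k / fact k * s^k\<bar>)" by (rule summable_rabs[OF sm])
  also have "\<dots> \<le> (\<Sum>k. Bb * (s^k / fact k))"
  proof (rule suminf_le[OF _ sm])
    show "summable (\<lambda>k. Bb * (s^k / fact k))" by (intro summable_mult summable_exp_real)
    fix k
    show "\<bar>b k / fact k * s^k\<bar> \<le> Bb * (s^k / fact k)"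
      using mult_right_mono[OF bd[of k], of "s^k / fact k"] s by (simp add: abs_mult)
  qed
  also have "\<dots> = Bb * exp s"
    using suminf_mult[OF summable_exp_real[of s], of Bb] by (simp add: exp_suminf_real)
  finally show ?thesis .
qed

lemma poisson_lim:
  fixes b :: "nat \<Rightarrow> real"
  assumes lim: "b \<longlonglongrightarrow> 0"
  shows "((\<lambda>s. (\<Sum>k. b k / fact k * s^k) / exp s) \<longlongrightarrow> 0) at_top"
proof (rule tendstoI)
  fix e :: real assume e: "e > 0"
  obtain N where N: "\<And>k. k \<ge> N \<Longrightarrow> \<bar>b k\<bar> < e/2" using LIMSEQ_D[OF lim, of "e/2"] e by auto
  define d where "d k = (if k < N then \<bar>b k\<bar> else 0)" for k
  have bd: "\<bar>b k\<bar> \<le> e/2 + d k" for k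
    using N[of k] e by (cases "k < N") (auto simp: d_def)
  have dn: "d k \<ge> 0" for k by (simp add: d_def)
  have dle: "d k \<le> (\<Sum>i<N. \<bar>b i\<bar>)" for k
  proof (cases "k < N")
    case True
    then show ?thesis unfolding d_def by (auto intro!: member_le_sum)
  next
    case False
    then show ?thesis unfolding d_def by (simp add: sum_nonneg)
  qed
  have bK: "\<bar>b k\<bar> \<le> e/2 + (\<Sum>i<N. \<bar>b i\<bar>)" for k
    using bd[of k] dle[of k] by linarith
  have lim0: "((\<lambda>s. \<Sum>k<N. \<bar>b k\<bar> / fact k * (s^k / exp s)) \<longlongrightarrow> 0) at_top"
    by (rule tendsto_null_sum) (rule tendsto_mult_right_zero[OF tendsto_power_div_exp_0])
  have "eventually (\<lambda>s. (\<Sum>k<N. \<bar>b k\<bar> / fact k * (s^k / exp s)) < e/2) at_top"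
    by (rule order_tendstoD(2)[OF lim0]) (use e in simp)
  moreover have "eventually (\<lambda>s::real. s \<ge> 0) at_top" by (rule eventually_ge_at_top)
  ultimately show "eventually (\<lambda>s. dist ((\<Sum>k. b k / fact k * s^k) / exp s) 0 < e) at_top"
  proof eventually_elim
    case (elim s)
    have sm: "summable (\<lambda>k. \<bar>b k / fact k * s^k\<bar>)"
      by (rule summable_coeffs_real[OF bK])
    have sE: "summable (\<lambda>k. e/2 * (s^k / fact k))" by (intro summable_mult summable_exp_real)
    have dfin: "(\<Sum>k. d k / fact k * s^k) = (\<Sum>k<N. \<bar>b k\<bar> / fact k * s^k)"
      by (subst suminf_finite[of "{..<N}"]) (auto simp: d_def)
    have sD: "summable (\<lambda>k. d k / fact k * s^k)"
      by (rule summable_finite[of "{..<N}"]) (auto simp: d_def)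
    have "\<bar>\<Sum>k. b k / fact k * s^k\<bar> \<le> (\<Sum>k. \<bar>b k / fact k * s^k\<bar>)" by (rule summable_rabs[OF sm])
    also have "\<dots> \<le> (\<Sum>k. e/2 * (s^k / fact k) + d k / fact k * s^k)"
    proof (rule suminf_le[OF _ sm])
      show "summable (\<lambda>k. e/2 * (s^k / fact k) + d k / fact k * s^k)" by (intro summable_add sE sD)
      fix k
      have "\<bar>b k / fact k * s^k\<bar> = \<bar>b k\<bar> * (s^k / fact k)" using elim(2) by (simp add: abs_mult)
      also have "\<dots> \<le> (e/2 + d k) * (s^k / fact k)" by (rule mult_right_mono[OF bd]) (use elim(2) in simp)
      also have "\<dots> = e/2 * (s^k / fact k) + d k / fact k * s^k" by (simp add: field_simps)
      finally show "\<bar>b k / fact k * s^k\<bar> \<le> e/2 * (s^k / fact k) + d k / fact k * s^k" .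
    qed
    also have "\<dots> = (\<Sum>k. e/2 * (s^k / fact k)) + (\<Sum>k. d k / fact k * s^k)"
      by (rule suminf_add[OF sE sD, symmetric])
    also have "(\<Sum>k. e/2 * (s^k / fact k)) = e/2 * exp s"
      using suminf_mult[OF summable_exp_real[of s], of "e/2"] exp_suminf_real[of s] by simp
    finally have ineq: "\<bar>\<Sum>k. b k / fact k * s^k\<bar> \<le> e/2 * exp s + (\<Sum>k<N. \<bar>b k\<bar> / fact k * s^k)"
      unfolding dfin .
    have "\<bar>(\<Sum>k. b k / fact k * s^k) / exp s\<bar> = \<bar>\<Sum>k. b k / fact k * s^k\<bar> / exp s"
      by (simp add: abs_divide)
    also have "\<dots> \<le> (e/2 * exp s + (\<Sum>k<N. \<bar>b k\<bar> / fact k * s^k)) / exp s"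
      by (rule divide_right_mono[OF ineq]) simp
    also have "\<dots> = e/2 + (\<Sum>k<N. \<bar>b k\<bar> / fact k * (s^k / exp s))"
      by (simp add: add_divide_distrib sum_divide_distrib)
    finally show ?case using elim(1) by (simp add: dist_real_def)
  qed
qed

lemma fact_double_le: "fact (2*j) \<le> (fact j * (2*j)^j :: nat)"
proof -
  have d: "fact j dvd (fact (2*j) :: nat)" by (rule fact_dvd) simp
  have "fact (2*j) div fact (2*j - j) \<le> (2*j)^j" by (rule fact_div_fact_le_pow) simp
  then have "fact (2*j) div fact j \<le> (2*j)^j" by simp
  then have "fact j * (fact (2*j) div fact j) \<le> fact j * (2*j)^j" by simp
  with d show ?thesis by simp
qed

lemma coeff_ineq:
  fixes \<delta> :: real assumes "\<delta> > 0"
  shows "((\<delta>^2/2) / real j) ^ j / fact j \<le> \<delta>^(2*j) / fact (2*j)"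
proof (cases "j = 0")
  case True then show ?thesis by simp
next
  case False
  have f: "(fact (2*j) :: real) \<le> fact j * (2 * real j)^j"
  proof -
    have "real (fact (2*j)) \<le> real (fact j * (2*j)^j)" using fact_double_le[of j] by (simp only: of_nat_le_iff)
    then show ?thesis by simp
  qed
  have "((\<delta>^2/2) / real j) ^ j / fact j = \<delta>^(2*j) / (fact j * (2 * real j)^j)"
    using False by (simp add: power_divide power_mult power_mult_distrib power2_eq_square field_simps)
  also have "\<dots> \<le> \<delta>^(2*j) / fact (2*j)"
    by (rule divide_left_mono[OF f]) (use assms False in auto)
  finally show ?thesis .
qed

lemma growth_series:
  fixes a :: "nat \<Rightarrow> real"
  assumes gr: "\<And>\<eta>. \<eta> > 0 \<Longrightarrow> \<exists>K\<ge>0. \<forall>j. \<bar>a j\<bar> \<le> K * (\<eta> / real j) ^ j"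
    and bd: "\<And>j. \<bar>a j\<bar> \<le> Ka" and \<delta>: "\<delta> > 0"
  shows "\<exists>C. \<forall>w. norm (\<Sum>j. complex_of_real (a j / fact j) * (w^2)^j) \<le> C * exp (\<delta> * norm w)"
proof -
  obtain K where K0: "K \<ge> 0" and K: "\<And>j. \<bar>a j\<bar> \<le> K * ((\<delta>^2/2) / real j) ^ j"
    using gr[of "\<delta>^2/2"] \<delta> by auto
  show ?thesis
  proof (intro exI allI)
    fix w :: complex
    define r where "r = norm w"
    define v where "v n = (\<delta> * r)^n / fact n" for n
    have vn: "v n \<ge> 0" for n using \<delta> by (simp add: v_def r_def)
    have sv: "summable v" unfolding v_def by (rule summable_exp_real)
    have sv2: "summable (v \<circ> (\<lambda>j. 2*j))" by (rule summable_reindex[OF sv _ vn]) (simp add: inj_on_def)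
    have sv2le: "suminf (v \<circ> (\<lambda>j. 2*j)) \<le> suminf v" by (rule suminf_reindex_mono[OF sv _ vn]) (simp add: inj_on_def)
    have sn: "summable (\<lambda>j. norm (complex_of_real (a j / fact j) * (w^2)^j))"
      by (rule summable_coeffs[OF bd])
    have "norm (\<Sum>j. complex_of_real (a j / fact j) * (w^2)^j) \<le> (\<Sum>j. norm (complex_of_real (a j / fact j) * (w^2)^j))"
      by (rule summable_norm[OF sn])
    also have "\<dots> \<le> (\<Sum>j. K * (v \<circ> (\<lambda>j. 2*j)) j)"
    proof (rule suminf_le[OF _ sn])
      show "summable (\<lambda>j. K * (v \<circ> (\<lambda>j. 2*j)) j)" by (rule summable_mult[OF sv2])
      fix j
      have "norm (complex_of_real (a j / fact j) * (w^2)^j) = \<bar>a j\<bar> / fact j * r^(2*j)"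
        by (simp add: norm_mult norm_power norm_divide r_def power_mult)
      also have "\<dots> \<le> K * ((\<delta>^2/2) / real j) ^ j / fact j * r^(2*j)"
        by (intro mult_right_mono divide_right_mono K) (simp_all add: r_def)
      also have "\<dots> = K * (((\<delta>^2/2) / real j) ^ j / fact j) * r^(2*j)" by simp
      also have "\<dots> \<le> K * (\<delta>^(2*j) / fact (2*j)) * r^(2*j)"
        by (intro mult_right_mono mult_left_mono coeff_ineq \<delta> K0) (simp_all add: r_def)
      also have "\<dots> = K * (v \<circ> (\<lambda>j. 2*j)) j"
        by (simp add: v_def power_mult_distrib)
      finally show "norm (complex_of_real (a j / fact j) * (w^2)^j) \<le> K * (v \<circ> (\<lambda>j. 2*j)) j" .
    qed
    also have "\<dots> = K * suminf (v \<circ> (\<lambda>j. 2*j))" by (rule suminf_mult[OF sv2])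
    also have "\<dots> \<le> K * suminf v" by (rule mult_left_mono[OF sv2le K0])
    also have "suminf v = exp (\<delta> * norm w)" unfolding v_def r_def by (rule exp_suminf_real)
    finally show "norm (\<Sum>j. complex_of_real (a j / fact j) * (w^2)^j) \<le> K * exp (\<delta> * norm w)" .
  qed
qed

lemma orbit_zero:
  fixes T :: "'a::banach \<Rightarrow> 'a"
  assumes bl: "bounded_linear T"
    and growth: "(\<lambda>n. onorm (T ^^ n) powr (1 / real n)) \<in> o(\<lambda>n. 1 / real n)"
    and lim: "(\<lambda>k. ((\<lambda>v. v + T v) ^^ k) x) \<longlonglongrightarrow> 0"
  shows "x = 0"
proof (rule ccontr)
  assume x0: "x \<noteq> 0"
  obtain \<phi> :: "'a \<Rightarrow> real" where add: "\<And>u v. \<phi> (u+v) = \<phi> u + \<phi> v"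
    and sc: "\<And>c v. \<phi> (c *\<^sub>R v) = c * \<phi> v" and nb: "\<And>v. \<bar>\<phi> v\<bar> \<le> norm v"
    and phx: "\<phi> x = norm x"
    using hahn_banach_norming[of x] by blast
  have linphi: "linear \<phi>" by (rule linearI) (simp_all add: add sc)
  have linT: "linear T" using bl by (rule bounded_linear.linear)
  define e where "e j = (T^^j) x" for j
  have e_suc: "e (Suc j) = T (e j)" for j by (simp add: e_def)
  define a where "a j = \<phi> (e j)" for j
  define b where "b k = \<phi> (((\<lambda>v. v + T v)^^k) x)" for k
  have b_eq: "b k = (\<Sum>j\<le>k. of_nat (k choose j) * a j)" for k
  proof -
    have "((\<lambda>v. v + T v)^^k) (e 0) = (\<Sum>j\<le>k. of_nat (k choose j) *\<^sub>R e j)"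
      by (rule binom_expand[of T e, OF linT e_suc])
    then have "((\<lambda>v. v + T v)^^k) x = (\<Sum>j\<le>k. of_nat (k choose j) *\<^sub>R e j)"
      by (simp add: e_def)
    then show ?thesis unfolding b_def a_def by (simp add: linear_sum[OF linphi] sc)
  qed
  have blim: "b \<longlonglongrightarrow> 0"
    by (rule Lim_null_comparison[OF _ tendsto_norm_zero[OF lim]]) (simp add: b_def nb)
  obtain Bb where Bb: "Bb > 0" "\<And>k. \<bar>b k\<bar> \<le> Bb"
    using BseqE[OF convergent_imp_Bseq[OF convergentI[OF blim]]] by (metis real_norm_def)
  have ae: "\<bar>a j\<bar> \<le> onorm (T^^j) * norm x" for j
  proof -
    have "\<bar>a j\<bar> \<le> norm (e j)" unfolding a_def by (rule nb)
    also have "\<dots> \<le> onorm (T^^j) * norm x" unfolding e_def by (rule onorm[OF funpow_bl[OF bl]])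
    finally show ?thesis .
  qed
  have agr: "\<exists>K\<ge>0. \<forall>j. \<bar>a j\<bar> \<le> K * (\<eta> / real j) ^ j" if ep: "\<eta> > 0" for \<eta>
  proof -
    obtain K where K0: "K \<ge> 0" and K: "\<And>j. onorm (T^^j) \<le> K * (\<eta> / real j) ^ j"
      using growth_bound[OF bl growth ep] by blast
    show ?thesis
    proof (intro exI[of _ "K * norm x"] conjI allI)
      show "K * norm x \<ge> 0" using K0 by simp
      fix j
      have "\<bar>a j\<bar> \<le> onorm (T^^j) * norm x" by (rule ae)
      also have "\<dots> \<le> K * (\<eta> / real j) ^ j * norm x" by (rule mult_right_mono[OF K]) simp
      finally show "\<bar>a j\<bar> \<le> K * norm x * (\<eta> / real j) ^ j" by (simp add: algebra_simps)
    qed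
  qed
  obtain K1 where K10: "K1 \<ge> 0" and K1: "\<And>j. \<bar>a j\<bar> \<le> K1 * (1 / real j) ^ j"
    using agr[of 1] by auto
  have Ka: "\<bar>a j\<bar> \<le> K1" for j
  proof -
    have "(1 / real j) ^ j \<le> 1" by (rule power_le_one) (auto simp: divide_le_eq)
    then have "K1 * (1 / real j) ^ j \<le> K1 * 1" by (rule mult_left_mono[OF _ K10])
    then show ?thesis using K1[of j] by simp
  qed
  define hc where "hc s = (\<Sum>j. complex_of_real (a j / fact j) * s^j)" for s
  define g where "g w = hc (w^2)" for w
  have summ: "summable (\<lambda>j. complex_of_real (a j / fact j) * s^j)" for s
    by (rule summable_norm_cancel[OF summable_coeffs[OF Ka]])
  have hol_hc: "hc holomorphic_on UNIV"
  proof -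
    have "hc field_differentiable (at s)" for s
      unfolding field_differentiable_def hc_def
      using termdiffs_strong_converges_everywhere[of "\<lambda>j. complex_of_real (a j / fact j)", OF summ] by blast
    then show ?thesis unfolding holomorphic_on_def using field_differentiable_at_within by blast
  qed
  have hol_g: "g holomorphic_on UNIV" unfolding g_def
    by (rule holomorphic_on_compose_gen[unfolded o_def, OF _ hol_hc]) (auto intro: holomorphic_intros)
  have gr_g: "\<exists>C. \<forall>w. norm (g w) \<le> C * exp (\<delta> * norm w)" if "\<delta> > 0" for \<delta>
    unfolding g_def hc_def by (rule growth_series[OF agr Ka that])
  define hr where "hr s = (\<Sum>j. a j / fact j * s^j)" for s
  have hc_real: "hc (of_real s) = of_real (hr s)" for s
  proof -
    have "(\<lambda>j. a j / fact j * s^j) sums hr s"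
      unfolding hr_def by (rule summable_sums[OF summable_rabs_cancel[OF summable_coeffs_real[OF Ka]]])
    then have "(\<lambda>j. complex_of_real (a j / fact j * s^j)) sums complex_of_real (hr s)"
      by (rule sums_of_real)
    then have "(\<lambda>j. complex_of_real (a j / fact j) * (of_real s)^j) sums complex_of_real (hr s)"
      by simp
    then show ?thesis unfolding hc_def by (rule sums_unique[symmetric])
  qed
  have cid: "exp s * hr s = (\<Sum>k. b k / fact k * s^k)" for s
    using cauchy_identity[OF Ka, of s] unfolding hr_def by (simp add: b_eq)
  have hr_bd: "\<bar>hr s\<bar> \<le> Bb" if "s \<ge> 0" for s
  proof -
    have "\<bar>exp s * hr s\<bar> \<le> Bb * exp s" unfolding cid by (rule poisson_bound[OF Bb(2) that])
    then show ?thesis by (simp add: abs_mult)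
  qed
  have hr_lim: "(hr \<longlongrightarrow> 0) at_top"
  proof -
    have "hr = (\<lambda>s. (exp s * hr s) / exp s)" by (rule ext) simp
    also have "\<dots> = (\<lambda>s. (\<Sum>k. b k / fact k * s^k) / exp s)" by (simp only: cid)
    finally have eq: "hr = (\<lambda>s. (\<Sum>k. b k / fact k * s^k) / exp s)" .
    show ?thesis unfolding eq by (rule poisson_lim[OF blim])
  qed
  have re_g: "norm (g (of_real t)) \<le> Bb + 1" for t
  proof -
    have "g (of_real t) = of_real (hr (t^2))" unfolding g_def by (simp flip: hc_real)
    then show ?thesis using hr_bd[of "t^2"] by simp
  qed
  have gconst: "g z = g 0" for z
    by (rule PL_const[OF hol_g _ re_g gr_g]) (use Bb in simp)
  have hc0: "hc 0 = complex_of_real (a 0 / fact 0)"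
    unfolding hc_def by (rule powser_zero)
  have g0: "g 0 = of_real (norm x)"
    unfolding g_def using hc0 phx by (simp add: a_def e_def)
  have hr_const: "hr s = norm x" if "s \<ge> 0" for s
  proof -
    have "of_real (hr s) = g (of_real (sqrt s))"
      unfolding g_def using that by (simp flip: hc_real of_real_power)
    also have "\<dots> = of_real (norm x)" using gconst g0 by simp
    finally show ?thesis by simp
  qed
  have "(hr \<longlongrightarrow> norm x) at_top"
  proof (rule tendsto_eventually)
    show "eventually (\<lambda>s. hr s = norm x) at_top"
      using eventually_ge_at_top[of 0] by eventually_elim (rule hr_const)
  qed
  with hr_lim have "norm x = 0" using tendsto_unique by (metis trivial_limit_at_top_linorder)
  with x0 show False by simp
qed

theorem corollary3p3:
  fixes T :: "'a::banach \<Rightarrow> 'a"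
  assumes nontriv: "\<exists>x::'a. x \<noteq> 0"
    and bl: "bounded_linear T"
    and growth: "(\<lambda>n. onorm (T ^^ n) powr (1 / real n)) \<in> o(\<lambda>n. 1 / real n)"
  shows "\<not> kitai_criterion (\<lambda>x. x + T x)"
proof
  assume "kitai_criterion (\<lambda>x. x + T x)"
  then obtain E :: "'a set" where cE: "closure E = UNIV"
    and Elim: "\<And>x. x \<in> E \<Longrightarrow> (\<lambda>k. ((\<lambda>x. x + T x) ^^ k) x) \<longlonglongrightarrow> 0"
    unfolding kitai_criterion_def by blast
  have "E \<subseteq> {0}" using orbit_zero[OF bl growth Elim] by blast
  then have "closure E \<subseteq> {0}" by (metis closure_mono closure_closed closed_singleton)
  with cE nontriv show False by auto
qed

end
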